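(* Let $p_c<q\le p\le1$. For all $x,y\in\mathbb{Z}^d$, $\mathbb{P}$-a.s., $a^q_\lambda(x,y,\omega_p)/\lambda$ is nonincreasing in $\lambda>0$ and converges to $d_{\omega_p}([x]_q,[y]_q)$ as $\lambda\to\infty$. Moreover, for all $x\in\mathbb{R}^d$, $\alpha^p_\lambda(x)/\lambda$ is nonincreasing in $\lambda>0$ and converges to $\mu^p(x)$ as $\lambda\to\infty$.
   Context: Setting: $d\ge2$, $p_c$ critical probability of Bernoulli bond percolation on $\mathbb{Z}^d$; coupling $\omega_p(e)=\mathbf 1\{U(e)>1-p\}$, $(U(e))$ i.i.d. uniform on $(0,1)$ under $\mathbb{P}$. $\mathcal{C}_\infty(\omega)$ infinite cluster, $d_\omega$ chemical distance, $[x]_q$ the $\ell^1$-closest point of $\mathcal{C}_\infty(\omega_q)$ to $x$ (deterministic tie-break). Simple random walk on open edges, $H(y)$ hitting time, $a_\lambda(x,y,\omega)=-\log E^x_\omega[e^{-\lambda H(y)}\mathbf 1\{H(y)<\infty\}]$, $a^q_\lambda(x,y,\omega_p)=a_\lambda([x]_q,[y]_q,\omega_p)$. $\alpha^p_\lambda$ the Lyapunov exponent: the norm with $(a_\lambda(0,x,\omega_p)-\alpha^p_\lambda(x))/\|x\|_1\to0$ a.s. on $\{0\in\mathcal{C}_\infty(\omega_p)\}$ along $x\in\mathcal{C}_\infty(\omega_p)$. $\mu^p$ is the time constant: the norm on $\mathbb{R}^d$ such that a.s. on $\{0\in\mathcal{C}_\infty(\omega_p)\}$, $\lim_{k\to\infty,\,kx\in\mathcal{C}_\infty(\omega_p)}d_{\omega_p}(0,kx)/k=\mu^p(x)$.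 *)

theory Defs
  imports "HOL-Probability.Probability"
begin

type_synonym 'd site = "int ^ 'd"
type_synonym 'd edge = "'d site set"
type_synonym 'd env = "'d edge \<Rightarrow> bool"

definition l1 :: "'d::finite site \<Rightarrow> int" where
  "l1 v = (\<Sum>i\<in>UNIV. \<bar>v $ i\<bar>)"

definition to_real :: "'d::finite site \<Rightarrow> real ^ 'd" where
  "to_real v = (\<chi> i. real_of_int (v $ i))"

definition Edges :: "'d::finite edge set" where
  "Edges = {{x, y} | x y. l1 (x - y) = 1}"

definition omega :: "('d edge \<Rightarrow> real) \<Rightarrow> real \<Rightarrow> 'd env" where
  "omega u p e = (u e > 1 - p)"

definition adj :: "'d::finite env \<Rightarrow> 'd site \<Rightarrow> 'd site \<Rightarrow> bool" where
  "adj w x y \<longleftrightarrow> {x, y} \<in> Edges \<and> w {x, y}"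

definition connected :: "'d::finite env \<Rightarrow> 'd site \<Rightarrow> 'd site \<Rightarrow> bool" where
  "connected w x y \<longleftrightarrow> (adj w)\<^sup>*\<^sup>* x y"

text \<open>Infinite cluster: the set of sites whose open cluster is infinite
  (a.s. for p > p_c this is the unique infinite cluster).\<close>
definition Cinf :: "'d::finite env \<Rightarrow> 'd site set" where
  "Cinf w = {x. infinite {y. connected w x y}}"

definition chem :: "'d::finite env \<Rightarrow> 'd site \<Rightarrow> 'd site \<Rightarrow> ereal" where
  "chem w x y = Inf {ereal (real n) | n. (adj w ^^ n) x y}"

text \<open>Closest point of C_inf to x in l1 distance, with a deterministic tie-break
  rule tb (tb x S picks an element of the finite nonempty set S of minimisers).\<close>
definition closest ::
  "('d site \<Rightarrow> 'd site set \<Rightarrow> 'd site) \<Rightarrow> 'd::finite env \<Rightarrow> 'd site \<Rightarrow> 'd site" where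
  "closest tb w x = tb x {z \<in> Cinf w. \<forall>v \<in> Cinf w. l1 (z - x) \<le> l1 (v - x)}"

definition deg :: "'d::finite env \<Rightarrow> 'd site \<Rightarrow> nat" where
  "deg w x = card {y. adj w x y}"

definition trans_prob :: "'d::finite env \<Rightarrow> 'd site \<Rightarrow> 'd site \<Rightarrow> real" where
  "trans_prob w x y = (if adj w x y then 1 / real (deg w x) else 0)"

text \<open>hitp w y n x = P^x_w(H(y) = n), with H(y) = inf{n >= 0. X_n = y}.\<close>
fun hitp :: "'d::finite env \<Rightarrow> 'd site \<Rightarrow> nat \<Rightarrow> 'd site \<Rightarrow> real" where
  "hitp w y 0 x = (if x = y then 1 else 0)"
| "hitp w y (Suc n) x =
     (if x = y then 0 else (\<Sum>z\<in>{z. adj w x z}. trans_prob w x z * hitp w y n z))"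

text \<open>E^x_w[exp(-lam H(y)) 1{H(y) < infinity}]\<close>
definition laplace :: "real \<Rightarrow> 'd::finite env \<Rightarrow> 'd site \<Rightarrow> 'd site \<Rightarrow> real" where
  "laplace lam w x y = (\<Sum>n. exp (- lam * real n) * hitp w y n x)"

definition a_lam :: "real \<Rightarrow> 'd::finite env \<Rightarrow> 'd site \<Rightarrow> 'd site \<Rightarrow> ereal" where
  "a_lam lam w x y = (if laplace lam w x y = 0 then \<infinity> else ereal (- ln (laplace lam w x y)))"

definition a_q ::
  "('d site \<Rightarrow> 'd site set \<Rightarrow> 'd site) \<Rightarrow> ('d edge \<Rightarrow> real) \<Rightarrow> real \<Rightarrow> real \<Rightarrow> real
     \<Rightarrow> 'd::finite site \<Rightarrow> 'd site \<Rightarrow> ereal" where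
  "a_q tb u q p lam x y =
     a_lam lam (omega u p) (closest tb (omega u q) x) (closest tb (omega u q) y)"

definition iid_uniform :: "'a measure \<Rightarrow> ('a \<Rightarrow> 'd::finite edge \<Rightarrow> real) \<Rightarrow> bool" where
  "iid_uniform M U \<longleftrightarrow> prob_space M
     \<and> prob_space.indep_vars M (\<lambda>_. borel) (\<lambda>e s. U s e) Edges
     \<and> (\<forall>e \<in> Edges. distr M borel (\<lambda>s. U s e) = uniform_measure lborel {0<..<1})"

definition p_crit :: "'a measure \<Rightarrow> ('a \<Rightarrow> 'd::finite edge \<Rightarrow> real) \<Rightarrow> real" where
  "p_crit M U = Sup {p \<in> {0..1}. measure M {s \<in> space M. 0 \<in> Cinf (omega (U s) p)} = 0}"

definition is_norm :: "(real ^ 'd \<Rightarrow> real) \<Rightarrow> bool" where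
  "is_norm f \<longleftrightarrow> (\<forall>x. 0 \<le> f x) \<and> (\<forall>x. f x = 0 \<longleftrightarrow> x = 0)
     \<and> (\<forall>c x. f (c *\<^sub>R x) = \<bar>c\<bar> * f x) \<and> (\<forall>x y. f (x + y) \<le> f x + f y)"

definition is_lyapunov ::
  "'a measure \<Rightarrow> ('a \<Rightarrow> 'd::finite edge \<Rightarrow> real) \<Rightarrow> real \<Rightarrow> real \<Rightarrow> (real ^ 'd \<Rightarrow> real) \<Rightarrow> bool" where
  "is_lyapunov M U p lam \<alpha> \<longleftrightarrow> is_norm \<alpha> \<and>
     (AE s in M. 0 \<in> Cinf (omega (U s) p) \<longrightarrow>
        (\<forall>\<epsilon>>0. \<exists>R. \<forall>x \<in> Cinf (omega (U s) p). real_of_int (l1 x) \<ge> R \<longrightarrow>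
            \<bar>a_lam lam (omega (U s) p) 0 x - ereal (\<alpha> (to_real x))\<bar>
              \<le> ereal (\<epsilon> * real_of_int (l1 x))))"

definition is_time_constant ::
  "'a measure \<Rightarrow> ('a \<Rightarrow> 'd::finite edge \<Rightarrow> real) \<Rightarrow> real \<Rightarrow> (real ^ 'd \<Rightarrow> real) \<Rightarrow> bool" where
  "is_time_constant M U p \<mu> \<longleftrightarrow> is_norm \<mu> \<and>
     (\<forall>x :: 'd site. AE s in M. 0 \<in> Cinf (omega (U s) p) \<longrightarrow>
        (\<forall>\<epsilon>>0. \<exists>K. \<forall>k::nat. k \<ge> K \<longrightarrow> 0 < k \<longrightarrow>
            (\<chi> i. int k * x $ i) \<in> Cinf (omega (U s) p) \<longrightarrow>
            \<bar>chem (omega (U s) p) 0 (\<chi> i. int k * x $ i) / ereal (real k)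
               - ereal (\<mu> (to_real x))\<bar> \<le> ereal \<epsilon>))"

end

theory Submission
  imports Defs
begin


lemma l1_minus_commute: "l1 (x - y) = l1 (y - x)"
  unfolding l1_def by (rule sum.cong) (auto simp: abs_minus_commute)

lemma adj_sym: "adj w x y = adj w y x"
  unfolding adj_def by (simp add: insert_commute)

lemma Edges_iff: "{x, y} \<in> Edges \<longleftrightarrow> l1 (x - y) = 1"
proof
  assume "{x, y} \<in> Edges"
  then obtain a b where ab: "{x,y} = {a,b}" "l1 (a - b) = 1" unfolding Edges_def by blast
  then show "l1 (x - y) = 1"
    by (auto simp: doubleton_eq_iff l1_minus_commute)
qed (auto simp: Edges_def)

lemma adj_imp_l1: "adj w x y \<Longrightarrow> l1 (x - y) = 1"
  unfolding adj_def using Edges_iff by blast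

lemma l1_one_axis:
  fixes v :: "int^'d::finite"
  assumes "l1 v = 1"
  shows "\<exists>i s. v = axis i s"
proof -
  have nz: "\<exists>i. v $ i \<noteq> 0"
  proof (rule ccontr)
    assume "\<not> ?thesis"
    then have "l1 v = 0" unfolding l1_def by simp
    with assms show False by simp
  qed
  then obtain i where i: "v $ i \<noteq> 0" by blast
  have split: "l1 v = \<bar>v $ i\<bar> + (\<Sum>j\<in>UNIV - {i}. \<bar>v $ j\<bar>)"
    unfolding l1_def by (simp add: sum.remove[of UNIV i])
  have "0 \<le> (\<Sum>j\<in>UNIV - {i}. \<bar>v $ j\<bar>)" by (rule sum_nonneg) simp
  moreover have "\<bar>v $ i\<bar> \<ge> 1" using i by linarith
  ultimately have z: "(\<Sum>j\<in>UNIV - {i}. \<bar>v $ j\<bar>) = 0" using split assms by linarith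
  have "\<forall>j\<in>UNIV - {i}. \<bar>v $ j\<bar> = 0"
    using sum_nonneg_eq_0_iff[of "UNIV - {i}" "\<lambda>j. \<bar>v $ j\<bar>"] z by simp
  then have "v = axis i (v $ i)"
    by (auto simp: vec_eq_iff axis_def)
  then show ?thesis by blast
qed

lemma neighbors_subset:
  "{y. adj w x y} \<subseteq> (\<lambda>(i, s). x - axis i s) ` (UNIV \<times> {1, -1::int})"
proof
  fix y assume "y \<in> {y. adj w x y}"
  then have l: "l1 (x - y) = 1" using adj_imp_l1 by blast
  then obtain i s where ax: "x - y = axis i s" using l1_one_axis by blast
  have "l1 (axis i s) = \<bar>s\<bar>"
    unfolding l1_def axis_def
    by (simp add: sum.delta'[of UNIV i "\<lambda>_. \<bar>s\<bar>", simplified] if_distrib cong: if_cong)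
  with l ax have "s = 1 \<or> s = -1" by auto
  moreover have "y = x - axis i s" using ax by (simp add: algebra_simps)
  ultimately show "y \<in> (\<lambda>(i, s). x - axis i s) ` (UNIV \<times> {1, -1::int})" by auto
qed

lemma finite_nb: "finite {y. adj w (x::'d::finite site) y}"
  by (rule finite_subset[OF neighbors_subset]) auto

lemma deg_le: "deg w (x::'d::finite site) \<le> 2 * CARD('d)"
proof -
  have "deg w x \<le> card ((\<lambda>(i, s). x - axis i s) ` (UNIV \<times> {1, -1::int}))"
    unfolding deg_def by (rule card_mono[OF _ neighbors_subset]) auto
  also have "\<dots> \<le> card (UNIV \<times> {1, -1::int} :: ('d \<times> int) set)"
    by (rule card_image_le) auto
  also have "\<dots> = 2 * CARD('d)" by (simp add: card_cartesian_product)
  finally show ?thesis .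
qed

lemma hitp_nonneg: "0 \<le> hitp w y n x"
  by (induction n arbitrary: x) (auto simp: trans_prob_def intro!: sum_nonneg)

lemma tp_sum: "(\<Sum>z\<in>{z. adj w x z}. trans_prob w x z) \<le> 1"
proof (cases "deg w x = 0")
  case True
  then have "{z. adj w x z} = {}" using finite_nb[of w x] unfolding deg_def by simp
  then show ?thesis by simp
next
  case False
  have "(\<Sum>z\<in>{z. adj w x z}. trans_prob w x z) = (\<Sum>z\<in>{z. adj w x z}. 1 / real (deg w x))"
    by (rule sum.cong) (auto simp: trans_prob_def)
  also have "\<dots> = 1" using False by (simp add: deg_def)
  finally show ?thesis by simp
qed

lemma hitp_partial: "(\<Sum>n<N. hitp w y n x) \<le> 1"
proof (induction N arbitrary: x)
  case 0
  then show ?case by simp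
next
  case (Suc N)
  have eq: "(\<Sum>n<Suc N. hitp w y n x) = hitp w y 0 x + (\<Sum>n<N. hitp w y (Suc n) x)"
    by (rule sum.lessThan_Suc_shift)
  show ?case
  proof (cases "x = y")
    case True
    then show ?thesis unfolding eq by simp
  next
    case False
    have "(\<Sum>n<N. hitp w y (Suc n) x)
        = (\<Sum>n<N. \<Sum>z\<in>{z. adj w x z}. trans_prob w x z * hitp w y n z)"
      using False by simp
    also have "\<dots> = (\<Sum>z\<in>{z. adj w x z}. trans_prob w x z * (\<Sum>n<N. hitp w y n z))"
      by (subst sum.swap) (simp add: sum_distrib_left)
    also have "\<dots> \<le> (\<Sum>z\<in>{z. adj w x z}. trans_prob w x z * 1)"
      by (rule sum_mono, rule mult_left_mono) (auto simp: trans_prob_def Suc.IH)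
    also have "\<dots> \<le> 1" using tp_sum by simp
    finally show ?thesis unfolding eq using False by simp
  qed
qed

lemma summable_hitp: "summable (\<lambda>n. hitp w y n x)"
  by (rule summableI_nonneg_bounded[where x=1]) (auto intro: hitp_nonneg hitp_partial)

lemma suminf_hitp: "(\<Sum>n. hitp w y n x) \<le> 1"
  by (rule suminf_le_const[OF summable_hitp]) (rule hitp_partial)

lemma summable_lap: "0 \<le> lam \<Longrightarrow> summable (\<lambda>n. exp (- lam * real n) * hitp w y n x)"
proof (rule summable_comparison_test'[OF summable_hitp])
  fix n assume "0 \<le> lam"
  then have "exp (- lam * real n) \<le> 1" by simp
  then show "norm (exp (- lam * real n) * hitp w y n x) \<le> hitp w y n x"
    using hitp_nonneg[of w y n x] by (simp add: mult_left_le_one_le)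
qed

lemma hitp_pos_path: "0 < hitp w y n x \<Longrightarrow> (adj w ^^ n) x y"
proof (induction n arbitrary: x)
  case 0
  then show ?case by (simp split: if_splits)
next
  case (Suc n)
  have xy: "x \<noteq> y"
  proof
    assume "x = y"
    then have "hitp w y (Suc n) x = 0" by simp
    with Suc.prems show False by simp
  qed
  have eqS: "hitp w y (Suc n) x = (\<Sum>z\<in>{z. adj w x z}. trans_prob w x z * hitp w y n z)"
    using xy by (simp only: hitp.simps if_False)
  have "(\<Sum>z\<in>{z. adj w x z}. trans_prob w x z * hitp w y n z) \<noteq> 0"
    using Suc.prems unfolding eqS by linarith
  then have "\<exists>z\<in>{z. adj w x z}. trans_prob w x z * hitp w y n z \<noteq> 0"
    by (rule sum.not_neutral_contains_not_neutral) blast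
  then obtain z where z1: "adj w x z" and z2: "trans_prob w x z * hitp w y n z \<noteq> 0"
    by blast
  have nn: "0 \<le> trans_prob w x z * hitp w y n z"
    using hitp_nonneg[of w y n z] by (simp add: trans_prob_def)
  have z: "adj w x z" "0 < trans_prob w x z * hitp w y n z"
    using z1 apply simp
    using order.not_eq_order_implies_strict[OF z2[symmetric] nn] .
  have "0 < hitp w y n z"
    using z(2) hitp_nonneg[of w y n z] by (metis mult_zero_right not_less order.not_eq_order_implies_strict)
  then have "(adj w ^^ n) z y" by (rule Suc.IH)
  then show ?case by (rule relpowp_Suc_I2[where P="adj w", OF z(1)])
qed

lemma hitp_zero: "\<not> (adj w ^^ n) x y \<Longrightarrow> hitp w y n x = 0"
  using hitp_pos_path hitp_nonneg by (metis order.not_eq_order_implies_strict)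

definition dlt :: "'d::finite itself \<Rightarrow> real" where "dlt _ = 1 / (2 * real CARD('d))"

lemma hitp_lower:
  fixes x y :: "'d::finite site"
  assumes "(adj w ^^ n) x y" "\<forall>m<n. \<not> (adj w ^^ m) x y"
  shows "hitp w y n x \<ge> dlt TYPE('d) ^ n"
  using assms
proof (induction n arbitrary: x)
  case 0
  then show ?case by simp
next
  case (Suc n)
  from Suc.prems(1) obtain z where z: "adj w x z" "(adj w ^^ n) z y" by (rule relpowp_Suc_E2)
  have xy: "x \<noteq> y" using Suc.prems(2) by auto
  have "\<forall>m<n. \<not> (adj w ^^ m) z y"
  proof (intro allI impI notI)
    fix m assume "m < n" "(adj w ^^ m) z y"
    have "(adj w ^^ Suc m) x y" by (rule relpowp_Suc_I2[where P="adj w", OF z(1)]) fact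
    moreover have "Suc m < Suc n" using \<open>m < n\<close> by simp
    ultimately show False using Suc.prems(2) by blast
  qed
  with z(2) have IH: "hitp w y n z \<ge> dlt TYPE('d) ^ n" by (rule Suc.IH)
  have ne: "{z. adj w x z} \<noteq> {}" using z(1) by blast
  have dpos: "0 < deg w x"
    unfolding deg_def using ne finite_nb[of w x] card_gt_0_iff by blast
  have dle: "real (deg w x) \<le> 2 * real CARD('d)"
    using deg_le[of w x] by linarith
  have tp: "trans_prob w x z = 1 / real (deg w x)"
    using z(1) by (simp add: trans_prob_def)
  have d1: "dlt TYPE('d) \<le> trans_prob w x z"
    unfolding tp dlt_def by (rule divide_left_mono) (use dle dpos in auto)
  have d0: "0 \<le> dlt TYPE('d)" by (simp add: dlt_def)
  have "dlt TYPE('d) ^ Suc n = dlt TYPE('d) * dlt TYPE('d) ^ n" by simp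
  also have "\<dots> \<le> trans_prob w x z * hitp w y n z"
    by (rule mult_mono[OF d1 IH]) (use d0 d1 in auto)
  also have "\<dots> \<le> (\<Sum>z\<in>{z. adj w x z}. trans_prob w x z * hitp w y n z)"
  proof (rule member_le_sum)
    show "z \<in> {z. adj w x z}" using z(1) by simp
    show "finite {z. adj w x z}" by (rule finite_nb)
    fix u assume "u \<in> {z. adj w x z} - {z}"
    show "0 \<le> trans_prob w x u * hitp w y n u"
      using hitp_nonneg[of w y n u] by (simp add: trans_prob_def)
  qed
  also have "\<dots> = hitp w y (Suc n) x" using xy by simp
  finally show ?case .
qed

lemma chem_eq:
  assumes "(adj w ^^ n) x y" "\<forall>m<n. \<not> (adj w ^^ m) x y"
  shows "chem w x y = ereal (real n)"
  unfolding chem_def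
proof (rule antisym)
  show "Inf {ereal (real n) |n. (adj w ^^ n) x y} \<le> ereal (real n)"
    using assms(1) by (intro Inf_lower) auto
  show "ereal (real n) \<le> Inf {ereal (real n) |n. (adj w ^^ n) x y}"
  proof (rule Inf_greatest)
    fix e assume "e \<in> {ereal (real n) |n. (adj w ^^ n) x y}"
    then obtain m where m: "e = ereal (real m)" "(adj w ^^ m) x y" by blast
    have "n \<le> m" using assms(2) m(2) not_less by blast
    then show "ereal (real n) \<le> e" using m(1) by simp
  qed
qed

lemma chem_inf:
  assumes "\<forall>m. \<not> (adj w ^^ m) x y"
  shows "chem w x y = \<infinity>"
  using assms unfolding chem_def by (simp add: top_ereal_def)



lemma hitp_lap_nonneg: "0 \<le> exp (- lam * real n) * hitp w y n x"
  using hitp_nonneg[of w y n x] by simp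

lemma lap_unreach: "\<forall>m. \<not> (adj w ^^ m) x y \<Longrightarrow> laplace lam w x y = 0"
proof -
  assume a: "\<forall>m. \<not> (adj w ^^ m) x y"
  have "\<And>n. hitp w y n x = 0" using a hitp_zero by blast
  then show ?thesis unfolding laplace_def by simp
qed

lemma a_lam_unreach: "\<forall>m. \<not> (adj w ^^ m) x y \<Longrightarrow> a_lam lam w x y = \<infinity>"
  unfolding a_lam_def using lap_unreach by simp

lemma lap_upper:
  assumes "0 \<le> lam" "\<forall>m<d. \<not> (adj w ^^ m) x y"
  shows "laplace lam w x y \<le> exp (- lam * real d)"
proof -
  have "laplace lam w x y \<le> (\<Sum>n. exp (- lam * real d) * hitp w y n x)"
    unfolding laplace_def
  proof (rule suminf_le)
    fix n
    show "exp (- lam * real n) * hitp w y n x \<le> exp (- lam * real d) * hitp w y n x"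
    proof (cases "n < d")
      case True
      then have "hitp w y n x = 0" using assms(2) hitp_zero by blast
      then show ?thesis by simp
    next
      case False
      then have "exp (- lam * real n) \<le> exp (- lam * real d)"
        using assms(1) by (simp add: mult_left_mono)
      then show ?thesis using hitp_nonneg[of w y n x] by (rule mult_right_mono)
    qed
  qed (rule summable_lap[OF assms(1)], rule summable_mult[OF summable_hitp])
  also have "\<dots> = exp (- lam * real d) * (\<Sum>n. hitp w y n x)"
    by (rule suminf_mult[OF summable_hitp])
  also have "\<dots> \<le> exp (- lam * real d) * 1"
    by (rule mult_left_mono[OF suminf_hitp]) simp
  finally show ?thesis by simp
qed

lemma lap_lower:
  fixes x y :: "'d::finite site"
  assumes "0 \<le> lam" "(adj w ^^ d) x y" "\<forall>m<d. \<not> (adj w ^^ m) x y"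
  shows "exp (- lam * real d) * dlt TYPE('d) ^ d \<le> laplace lam w x y"
proof -
  have "exp (- lam * real d) * dlt TYPE('d) ^ d \<le> exp (- lam * real d) * hitp w y d x"
    by (rule mult_left_mono[OF hitp_lower[OF assms(2,3)]]) simp
  also have "\<dots> \<le> (\<Sum>n\<in>{d}. exp (- lam * real n) * hitp w y n x)" by simp
  also have "\<dots> \<le> laplace lam w x y"
    unfolding laplace_def
    by (rule sum_le_suminf[OF summable_lap[OF assms(1)]]) (auto intro!: mult_nonneg_nonneg hitp_nonneg)
  finally show ?thesis .
qed

lemma dlt_pos: "0 < dlt TYPE('d::finite)"
  by (simp add: dlt_def)

lemma ln_dlt: "ln (dlt TYPE('d::finite)) = - ln (2 * real CARD('d))"
  by (simp add: dlt_def ln_div)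

lemma a_lam_reach:
  fixes x y :: "'d::finite site"
  assumes "0 < lam" "(adj w ^^ d) x y" "\<forall>m<d. \<not> (adj w ^^ m) x y"
  shows "0 < laplace lam w x y"
    and "a_lam lam w x y = ereal (- ln (laplace lam w x y))"
    and "lam * real d \<le> - ln (laplace lam w x y)"
    and "- ln (laplace lam w x y) \<le> lam * real d + real d * ln (2 * real CARD('d))"
proof -
  have lo: "exp (- lam * real d) * dlt TYPE('d) ^ d \<le> laplace lam w x y"
    using lap_lower[OF _ assms(2,3)] assms(1) by simp
  have up: "laplace lam w x y \<le> exp (- lam * real d)"
    using lap_upper[OF _ assms(3)] assms(1) by simp
  have pos: "0 < exp (- lam * real d) * dlt TYPE('d) ^ d"
    using dlt_pos[where 'd='d] by simp
  show L: "0 < laplace lam w x y" using lo pos by linarith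
  then show "a_lam lam w x y = ereal (- ln (laplace lam w x y))"
    unfolding a_lam_def by simp
  have "ln (laplace lam w x y) \<le> ln (exp (- lam * real d))"
    using up L by (subst ln_le_cancel_iff) auto
  then show "lam * real d \<le> - ln (laplace lam w x y)" by simp
  have "ln (exp (- lam * real d) * dlt TYPE('d) ^ d) \<le> ln (laplace lam w x y)"
    using lo pos L by (subst ln_le_cancel_iff) auto
  moreover have "ln (exp (- lam * real d) * dlt TYPE('d) ^ d)
      = - lam * real d - real d * ln (2 * real CARD('d))"
    using dlt_pos[where 'd='d] by (simp add: ln_mult ln_realpow ln_dlt algebra_simps)
  ultimately show "- ln (laplace lam w x y) \<le> lam * real d + real d * ln (2 * real CARD('d))"
    by linarith
qed

lemma reach_least:
  assumes "\<exists>m. (adj w ^^ m) x y"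
  obtains d where "(adj w ^^ d) x y" "\<forall>m<d. \<not> (adj w ^^ m) x y"
proof -
  let ?d = "LEAST m. (adj w ^^ m) x y"
  have "(adj w ^^ ?d) x y" using assms by (rule LeastI_ex)
  moreover have "\<forall>m<?d. \<not> (adj w ^^ m) x y" using not_less_Least by blast
  ultimately show ?thesis using that by blast
qed

lemma lap_holder:
  fixes x y :: "'d::finite site"
  assumes l: "0 < la" "la \<le> lb" and S: "0 < laplace lb w x y"
  shows "laplace la w x y \<le> laplace lb w x y powr (la / lb)"
proof -
  define S where "S = laplace lb w x y"
  define t where "t = la / lb"
  have t: "0 < t" "t \<le> 1" using l by (auto simp: t_def)
  have Spos: "0 < S" using S by (simp add: S_def)
  define c where "c = S powr (1 - t)"
  have cpos: "0 < c" using Spos by (simp add: c_def)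
  have lb: "0 < lb" using l by linarith
  have pt: "exp (- la * real n) \<le> (t * exp (- lb * real n) + (1 - t) * S) / c" for n
  proof -
    have "exp (- lb * real n) powr t * S powr (1 - t) \<le> t * exp (- lb * real n) + (1 - t) * S"
      by (rule Youngs_inequality_0) (use t Spos in auto)
    moreover have "exp (- lb * real n) powr t = exp (- la * real n)"
      using lb by (simp add: powr_def t_def)
    ultimately show ?thesis using cpos by (simp add: c_def pos_le_divide_eq)
  qed
  have sh: "summable (\<lambda>n. hitp w y n x)" by (rule summable_hitp)
  have sla: "summable (\<lambda>n. exp (- la * real n) * hitp w y n x)" using l by (intro summable_lap) simp
  have sl: "summable (\<lambda>n. exp (- lb * real n) * hitp w y n x)" using lb by (intro summable_lap) simp
  have e1: "(\<Sum>n. t * (exp (- lb * real n) * hitp w y n x) + ((1 - t) * S) * hitp w y n x)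
      = (\<Sum>n. t * (exp (- lb * real n) * hitp w y n x)) + (\<Sum>n. ((1 - t) * S) * hitp w y n x)"
    by (rule suminf_add[symmetric]) (intro summable_mult sl sh)+
  have e2: "(\<Sum>n. t * (exp (- lb * real n) * hitp w y n x)) + (\<Sum>n. ((1 - t) * S) * hitp w y n x)
     = t * S + ((1 - t) * S) * (\<Sum>n. hitp w y n x)"
    by (simp only: suminf_mult[OF sl] suminf_mult[OF sh] S_def laplace_def)
  have "laplace la w x y \<le> (\<Sum>n. (t * (exp (- lb * real n) * hitp w y n x) + ((1 - t) * S) * hitp w y n x) / c)"
    unfolding laplace_def
  proof (rule suminf_le)
    fix n
    have "exp (- la * real n) * hitp w y n x \<le> (t * exp (- lb * real n) + (1 - t) * S) / c * hitp w y n x"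
      by (rule mult_right_mono[OF pt hitp_nonneg])
    then show "exp (- la * real n) * hitp w y n x
        \<le> (t * (exp (- lb * real n) * hitp w y n x) + (1 - t) * S * hitp w y n x) / c"
      by (simp add: algebra_simps)
  qed (rule sla, intro summable_divide summable_add summable_mult sl sh)
  also have "\<dots> = (\<Sum>n. t * (exp (- lb * real n) * hitp w y n x) + ((1 - t) * S) * hitp w y n x) / c"
    by (rule suminf_divide) (intro summable_add summable_mult sl sh)
  also have "\<dots> = (t * S + ((1 - t) * S) * (\<Sum>n. hitp w y n x)) / c"
    using e1 e2 by simp
  also have "\<dots> \<le> (t * S + (1 - t) * S * 1) / c"
    using t Spos cpos suminf_hitp[of w y x]
    by (intro divide_right_mono add_left_mono mult_left_mono) auto
  also have "\<dots> = S / c" by (simp add: algebra_simps)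
  also have "\<dots> = S powr t" unfolding c_def using Spos
    by (simp add: powr_diff)
  finally show ?thesis by (simp add: S_def t_def)
qed

lemma a_lam_mono:
  fixes x y :: "'d::finite site"
  assumes l: "0 < la" "la \<le> lb"
  shows "a_lam lb w x y / ereal lb \<le> a_lam la w x y / ereal la"
proof (cases "\<exists>m. (adj w ^^ m) x y")
  case False
  then show ?thesis using a_lam_unreach[of w x y] l by simp
next
  case True
  then obtain d where d: "(adj w ^^ d) x y" "\<forall>m<d. \<not> (adj w ^^ m) x y" by (rule reach_least)
  have lb: "0 < lb" using l by linarith
  note r1 = a_lam_reach[OF l(1) d] and r2 = a_lam_reach[OF lb d]
  have "ln (laplace la w x y) \<le> ln (laplace lb w x y powr (la / lb))"
    using lap_holder[OF l r2(1)] r1(1) r2(1) by (subst ln_le_cancel_iff) auto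
  also have "\<dots> = (la / lb) * ln (laplace lb w x y)" by (simp add: ln_powr)
  finally have h: "ln (laplace la w x y) \<le> (la / lb) * ln (laplace lb w x y)" .
  have "- ln (laplace lb w x y) / lb \<le> - ln (laplace la w x y) / la"
    using h l lb by (simp add: field_simps)
  then show ?thesis using r1(2) r2(2) l lb by simp
qed

lemma a_lam_lim:
  fixes x y :: "'d::finite site"
  shows "((\<lambda>lam. a_lam lam w x y / ereal lam) \<longlongrightarrow> chem w x y) at_top"
proof (cases "\<exists>m. (adj w ^^ m) x y")
  case False
  then have F: "\<forall>m. \<not> (adj w ^^ m) x y" by blast
  have "\<forall>\<^sub>F lam in at_top. \<infinity> = a_lam lam w x y / ereal lam"
    using eventually_gt_at_top[of "0::real"]
    by eventually_elim (use a_lam_unreach[OF F] in simp)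
  then have "((\<lambda>lam. a_lam lam w x y / ereal lam) \<longlongrightarrow> \<infinity>) at_top"
    by (rule Lim_transform_eventually[OF tendsto_const])
  then show ?thesis using chem_inf[OF F] by simp
next
  case True
  then obtain d where d: "(adj w ^^ d) x y" "\<forall>m<d. \<not> (adj w ^^ m) x y" by (rule reach_least)
  define f where "f lam = - ln (laplace lam w x y) / lam" for lam
  define C where "C = real d * ln (2 * real CARD('d))"
  have "(f \<longlongrightarrow> real d) at_top"
  proof (rule tendsto_sandwich)
    show "\<forall>\<^sub>F n in at_top. real d \<le> f n"
      using eventually_gt_at_top[of "0::real"]
      by eventually_elim (use a_lam_reach(3)[OF _ d] in \<open>simp add: f_def field_simps\<close>)
    show "\<forall>\<^sub>F n in at_top. f n \<le> real d + C / n"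
      using eventually_gt_at_top[of "0::real"]
      by eventually_elim (use a_lam_reach(4)[OF _ d] in \<open>simp add: f_def C_def field_simps\<close>)
    show "((\<lambda>n. real d) \<longlongrightarrow> real d) at_top" by simp
    have "((\<lambda>n::real. C / n) \<longlongrightarrow> 0) at_top"
      by (rule real_tendsto_divide_at_top[OF tendsto_const filterlim_ident])
    then show "((\<lambda>n. real d + C / n) \<longlongrightarrow> real d) at_top"
      using tendsto_add[OF tendsto_const, of _ 0 at_top "real d"] by simp
  qed
  then have "((\<lambda>lam. ereal (f lam)) \<longlongrightarrow> ereal (real d)) at_top" by (rule tendsto_ereal)
  moreover have "\<forall>\<^sub>F lam in at_top. ereal (f lam) = a_lam lam w x y / ereal lam"
    using eventually_gt_at_top[of "0::real"]
    by eventually_elim (use a_lam_reach(2)[OF _ d] in \<open>simp add: f_def\<close>)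
  ultimately show ?thesis using chem_eq[OF d] by (metis Lim_transform_eventually)
qed



definition tr :: "'d::finite site \<Rightarrow> 'd edge \<Rightarrow> 'd edge" where
  "tr v e = (\<lambda>x. x + v) ` e"

definition shiftc :: "'d::finite site \<Rightarrow> ('d edge \<Rightarrow> real) \<Rightarrow> ('d edge \<Rightarrow> real)" where
  "shiftc v w = (\<lambda>e\<in>Edges. w (tr v e))"

lemma tr_pair: "tr v {x, y} = {x + v, y + v}"
  by (simp add: tr_def)

lemma Edges_shift: "{x + v, y + v} \<in> Edges \<longleftrightarrow> {x, y} \<in> Edges"
  by (simp add: Edges_iff)

lemma tr_Edges: "e \<in> Edges \<Longrightarrow> tr v e \<in> Edges"
proof -
  assume "e \<in> Edges"
  then obtain a b where "e = {a, b}" "l1 (a - b) = 1" unfolding Edges_def by blast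
  then show "tr v e \<in> Edges" by (simp add: tr_pair Edges_iff)
qed

lemma tr_tr: "tr (- v) (tr v e) = e"
  unfolding tr_def by (auto simp: image_image)

lemma inj_tr: "inj_on (tr v) A"
  by (metis inj_onI tr_tr)

lemma adj_shift: "adj (omega (shiftc v w) p) x y \<longleftrightarrow> adj (omega w p) (x + v) (y + v)"
  unfolding adj_def omega_def shiftc_def by (auto simp: Edges_shift tr_pair)

lemma relpowp_transfer:
  assumes "\<And>a b. R a b \<longleftrightarrow> Q (a + v) (b + (v :: 'b :: ab_group_add))"
  shows "(R ^^ n) a b \<longleftrightarrow> (Q ^^ n) (a + v) (b + v)"
proof (induction n arbitrary: b)
  case 0
  then show ?case by simp
next
  case (Suc n)
  show ?case
  proof
    assume "(R ^^ Suc n) a b"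
    then obtain z where "(R ^^ n) a z" "R z b" by (rule relpowp_Suc_E)
    then show "(Q ^^ Suc n) (a + v) (b + v)"
      using Suc.IH assms by (blast intro: relpowp_Suc_I)
  next
    assume "(Q ^^ Suc n) (a + v) (b + v)"
    then obtain z where z: "(Q ^^ n) (a + v) z" "Q z (b + v)" by (rule relpowp_Suc_E)
    have "z = (z - v) + v" by simp
    with z have "(R ^^ n) a (z - v)" "R (z - v) b"
      using Suc.IH[of "z - v"] assms[of "z - v" b] by auto
    then show "(R ^^ Suc n) a b" by (rule relpowp_Suc_I)
  qed
qed

lemma connected_shift:
  "connected (omega (shiftc v w) p) x y \<longleftrightarrow> connected (omega w p) (x + v) (y + v)"
  unfolding connected_def rtranclp_power
  using relpowp_transfer[of "adj (omega (shiftc v w) p)" "adj (omega w p)" v, OF adj_shift] by blast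

lemma Cinf_shift: "x \<in> Cinf (omega (shiftc v w) p) \<longleftrightarrow> x + v \<in> Cinf (omega w p)"
proof -
  have "{y. connected (omega (shiftc v w) p) x y} = (\<lambda>y. y - v) ` {y. connected (omega w p) (x + v) y}"
  proof (rule set_eqI)
    fix y
    show "y \<in> {y. connected (omega (shiftc v w) p) x y} \<longleftrightarrow> y \<in> (\<lambda>y. y - v) ` {y. connected (omega w p) (x + v) y}"
      unfolding connected_shift
      by (auto simp: image_iff intro!: exI[of _ "y + v"])
  qed
  moreover have "inj (\<lambda>y::'a site. y - v)" by (simp add: inj_on_def)
  ultimately show ?thesis
    unfolding Cinf_def by (simp add: finite_image_iff inj_on_subset)
qed

lemma adj_agree:
  assumes "\<forall>e\<in>Edges. w e = w' e"
  shows "adj (omega w p) = adj (omega w' p)"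
  using assms unfolding adj_def omega_def by (intro ext) auto

lemma Cinf_agree:
  assumes "\<forall>e\<in>Edges. w e = w' e"
  shows "Cinf (omega w p) = Cinf (omega w' p)"
  unfolding Cinf_def connected_def adj_agree[OF assms] ..

lemma finite_box: "finite {y::'d::finite site. \<forall>i. y $ i \<in> A}" if "finite A"
proof -
  have "{y::'d site. \<forall>i. y $ i \<in> A} \<subseteq> (\<lambda>f. \<chi> i. f i) ` (PiE UNIV (\<lambda>_. A))"
  proof
    fix y :: "'d site" assume "y \<in> {y. \<forall>i. y $ i \<in> A}"
    then have "(\<lambda>i. y $ i) \<in> PiE UNIV (\<lambda>_. A)" by auto
    moreover have "y = (\<chi> i. (\<lambda>i. y $ i) i)" by simp
    ultimately show "y \<in> (\<lambda>f. \<chi> i. f i) ` (PiE UNIV (\<lambda>_. A))" by blast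
  qed
  moreover have "finite ((\<lambda>f. \<chi> i. f i) ` (PiE UNIV (\<lambda>_. A)) :: 'd site set)"
    using that by (intro finite_imageI finite_PiE) auto
  ultimately show ?thesis using finite_subset by blast
qed

lemma finite_l1_ball: "finite {y::'d::finite site. l1 y \<le> N}"
proof -
  have "{y::'d site. l1 y \<le> N} \<subseteq> {y. \<forall>i. y $ i \<in> {-N..N}}"
  proof safe
    fix y :: "'d site" and i assume "l1 y \<le> N"
    moreover have "\<bar>y $ i\<bar> \<le> l1 y" unfolding l1_def
      by (rule member_le_sum) auto
    ultimately show "y $ i \<in> {-N..N}" by auto
  qed
  then show ?thesis by (rule finite_subset) (rule finite_box, simp)
qed

lemma Cinf_iff: "x \<in> Cinf w \<longleftrightarrow> (\<forall>n::nat. \<exists>y. int n < l1 y \<and> (\<exists>m. (adj w ^^ m) x y))"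
proof -
  have "infinite S \<longleftrightarrow> (\<forall>n::nat. \<exists>y\<in>S. int n < l1 y)" for S :: "'a site set"
  proof
    assume inf: "infinite S"
    show "\<forall>n::nat. \<exists>y\<in>S. int n < l1 y"
    proof (rule ccontr)
      assume "\<not> ?thesis"
      then obtain n :: nat where "\<forall>y\<in>S. l1 y \<le> int n" by (auto simp: not_less)
      then have "S \<subseteq> {y. l1 y \<le> int n}" by auto
      with inf finite_l1_ball show False using finite_subset by blast
    qed
  next
    assume h: "\<forall>n::nat. \<exists>y\<in>S. int n < l1 y"
    show "infinite S"
    proof
      assume fin: "finite S"
      have "\<exists>y\<in>S. int (nat (Max (l1 ` S))) < l1 y" using h by blast
      then obtain y where y: "y \<in> S" "int (nat (Max (l1 ` S))) < l1 y" by blast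
      have "l1 y \<le> Max (l1 ` S)" using fin y(1) by auto
      with y(2) show False by linarith
    qed
  qed
  then show ?thesis unfolding Cinf_def connected_def rtranclp_power by (simp add: conj_commute)
qed

abbreviation CM :: "'d::finite edge set \<Rightarrow> ('d edge \<Rightarrow> real) measure" where
  "CM E \<equiv> Pi\<^sub>M E (\<lambda>_. borel)"

lemma pred_adj: "Measurable.pred (CM Edges) (\<lambda>w. adj (omega w p) x y)"
proof (cases "{x, y} \<in> Edges")
  case True
  have m: "(\<lambda>w. w {x, y}) \<in> borel_measurable (CM Edges)"
    using True by (rule measurable_component_singleton)
  have "Measurable.pred (CM Edges) (\<lambda>w. 1 - p < w {x, y})" using m by (intro borel_measurable_pred_less) auto
  then show ?thesis using True unfolding adj_def omega_def by simp
next
  case False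
  then show ?thesis unfolding adj_def by simp
qed

lemma pred_relpow: "Measurable.pred (CM Edges) (\<lambda>w. (adj (omega w p) ^^ n) x y)"
proof (induction n arbitrary: y)
  case 0
  then show ?case by simp
next
  case (Suc n)
  have eq: "(adj (omega w p) ^^ Suc n) x y \<longleftrightarrow> (\<exists>z. (adj (omega w p) ^^ n) x z \<and> adj (omega w p) z y)" for w
    by (auto elim: relpowp_Suc_E intro: relpowp_Suc_I)
  show ?case unfolding eq
    by (intro pred_intros_countable pred_intros_logic Suc.IH pred_adj)
qed

lemma pred_Cinf: "Measurable.pred (CM Edges) (\<lambda>w. x \<in> Cinf (omega w p))"
  unfolding Cinf_iff
  by (intro pred_intros_countable pred_intros_logic pred_relpow) simp



definition smul :: "nat \<Rightarrow> 'd::finite site \<Rightarrow> 'd site" where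
  "smul k z = (\<chi> i. int k * z $ i)"

lemma smul_add: "smul k z + smul j z = smul (k + j) z"
  by (simp add: smul_def vec_eq_iff algebra_simps)

lemma infinite_iff_shift: "infinite {k::nat. Q k} \<longleftrightarrow> (\<forall>m. \<exists>n. Q (n + m))"
  unfolding infinite_nat_iff_unbounded_le
proof safe
  fix m assume "\<forall>m. \<exists>n\<ge>m. n \<in> {k. Q k}"
  then obtain n where "n \<ge> m" "Q n" by auto
  then show "\<exists>n. Q (n + m)" by (intro exI[of _ "n - m"]) auto
next
  fix m assume "\<forall>m. \<exists>n. Q (n + m)"
  then obtain n where "Q (n + m)" by auto
  then show "\<exists>n\<ge>m. n \<in> {k. Q k}" by (intro exI[of _ "n + m"]) auto
qed

lemma infinite_shift: "infinite {k::nat. Q (k + j)} \<longleftrightarrow> infinite {k. Q k}"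
  unfolding infinite_iff_shift
proof safe
  fix m assume "\<forall>m. \<exists>n. Q (n + m + j)"
  then obtain n where "Q (n + m + j)" by blast
  then show "\<exists>n. Q (n + m)" by (intro exI[of _ "n + j"]) (simp add: ac_simps)
next
  fix m assume "\<forall>m. \<exists>n. Q (n + m)"
  then obtain n where "Q (n + (m + j))" by blast
  then show "\<exists>n. Q (n + m + j)" by (intro exI[of _ n]) (simp add: ac_simps)
qed

lemma l1_axis: "l1 (axis i s :: 'd::finite site) = \<bar>s\<bar>"
proof -
  have "l1 (axis i s :: 'd site) = (\<Sum>j\<in>UNIV. if j = i then \<bar>s\<bar> else 0)"
    unfolding l1_def axis_def by (intro sum.cong) auto
  also have "\<dots> = \<bar>s\<bar>" by simp
  finally show ?thesis .
qed

lemma Edges_ne: "(Edges :: 'd::finite edge set) \<noteq> {}"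
proof -
  obtain i :: 'd where True by blast
  have e: "(0 - axis i 1 :: 'd site) = axis i (-1)"
    by (simp add: axis_def vec_eq_iff)
  have "l1 (0 - axis i 1 :: 'd site) = 1"
    unfolding e l1_axis by simp
  then have "{0, axis i 1} \<in> (Edges :: 'd edge set)" by (simp add: Edges_iff)
  then show ?thesis by blast
qed

lemma key_prob:
  fixes U :: "'a \<Rightarrow> 'd::finite edge \<Rightarrow> real" and z :: "'d site"
  assumes iid: "iid_uniform M U"
    and th: "0 < measure M {s \<in> space M. 0 \<in> Cinf (omega (U s) p)}"
  shows "0 < measure M {s \<in> space M. 0 \<in> Cinf (omega (U s) p)
                 \<and> infinite {k. smul k z \<in> Cinf (omega (U s) p)}}"
proof -
  interpret prob_space M using iid by (simp add: iid_uniform_def)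
  have ind: "indep_vars (\<lambda>_. borel) (\<lambda>e s. U s e) Edges" using iid by (simp add: iid_uniform_def)
  have rv: "random_variable borel (\<lambda>s. U s e)" if "e \<in> Edges" for e
    using ind that unfolding indep_vars_def2 by simp
  define Unif :: "real measure" where "Unif = uniform_measure lborel {0<..<1}"
  have marg: "distr M borel (\<lambda>s. U s e) = Unif" if "e \<in> Edges" for e
    using iid that by (simp add: iid_uniform_def Unif_def)
  obtain e0 where e0: "e0 \<in> (Edges :: 'd edge set)" using Edges_ne by blast
  have UP: "prob_space Unif" using prob_space_distr[OF rv[OF e0]] marg[OF e0] by simp
  define P where "P = Pi\<^sub>M (Edges :: 'd edge set) (\<lambda>_. Unif)"
  define \<Phi> where "\<Phi> = (\<lambda>s. \<lambda>e\<in>(Edges :: 'd edge set). U s e)"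
  have \<Phi>m: "\<Phi> \<in> measurable M (CM Edges)"
    unfolding \<Phi>_def by (rule measurable_restrict) (rule rv)
  have "distr M (CM Edges) (\<lambda>x. \<lambda>i\<in>Edges. U x i) = Pi\<^sub>M Edges (\<lambda>i. distr M borel (\<lambda>s. U s i))"
    using indep_vars_iff_distr_eq_PiM'[where X="\<lambda>e s. U s e" and M'="\<lambda>_. borel", OF Edges_ne rv] ind by simp
  also have "\<dots> = P" unfolding P_def by (rule PiM_cong) (simp_all add: marg)
  finally have distr\<Phi>: "distr M (CM Edges) \<Phi> = P" unfolding \<Phi>_def .
  have setsP: "sets P = sets (CM Edges)"
    unfolding P_def by (rule sets_PiM_cong) (simp_all add: Unif_def)
  have spaceP: "space P = space (CM Edges)" by (rule sets_eq_imp_space_eq[OF setsP])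
  interpret Pp: prob_space P unfolding P_def by (rule prob_space_PiM) (rule UP)
  have measP: "measurable P P = measurable (CM Edges) (CM Edges)"
    by (rule measurable_cong_sets[OF setsP setsP])
  have Sm: "shiftc v \<in> measurable P P" for v :: "'d site"
    unfolding measP shiftc_def
    by (rule measurable_restrict) (rule measurable_component_singleton, rule tr_Edges)
  have Spres: "distr P P (shiftc v) = P" for v :: "'d site"
    unfolding P_def shiftc_def
    using distr_PiM_reindex[of Edges "\<lambda>_. Unif" "tr v" Edges] inj_tr tr_Edges UP by auto
  have Smeas: "measure P (shiftc v -` A \<inter> space P) = measure P A" if "A \<in> sets P" for v :: "'d site" and A
    using measure_distr[OF Sm that, of v] Spres[of v] by simp
  define B where "B x = {w \<in> space P. x \<in> Cinf (omega w p)}" for x :: "'d site"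
  have Bsets: "B x \<in> sets P" for x
    unfolding B_def spaceP setsP using pred_Cinf[of x p] unfolding Measurable.pred_def .
  define L where "L = {w \<in> space P. infinite {k. smul k z \<in> Cinf (omega w p)}}"
  have Lsets: "L \<in> sets P"
  proof -
    have "Measurable.pred (CM Edges) (\<lambda>w. \<forall>m. \<exists>n. smul (n + m) z \<in> Cinf (omega w p))"
      by (intro pred_intros_countable pred_Cinf)
    then show ?thesis
      unfolding L_def spaceP setsP infinite_iff_shift Measurable.pred_def .
  qed
  have preB: "shiftc v -` B x \<inter> space P = B (x + v)" for x v
    unfolding B_def using measurable_space[OF Sm] by (auto simp: Cinf_shift)
  have preL: "shiftc (smul j z) -` L \<inter> space P = L" for j
  proof -
    have "infinite {k. smul k z \<in> Cinf (omega (shiftc (smul j z) w) p)}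
        \<longleftrightarrow> infinite {k. smul k z \<in> Cinf (omega w p)}" for w
      unfolding Cinf_shift smul_add
      using infinite_shift[of "\<lambda>k. smul k z \<in> Cinf (omega w p)" j] by simp
    then show ?thesis unfolding L_def using measurable_space[OF Sm] by auto
  qed
  have mB: "measure P (B (smul j z)) = measure P (B 0)" for j
    using Smeas[OF Bsets[of 0], of "smul j z"] preB[of "smul j z" 0, simplified] by simp
  have mBL: "measure P (B (smul j z) \<inter> L) = measure P (B 0 \<inter> L)" for j
  proof -
    have "shiftc (smul j z) -` (B 0 \<inter> L) \<inter> space P = B (smul j z) \<inter> L"
      using preB[of "smul j z" 0, simplified] preL[of j] by auto
    then show ?thesis using Smeas[of "B 0 \<inter> L" "smul j z"] Bsets Lsets by auto
  qed
  have transfer: "measure M {s \<in> space M. Q (Cinf (omega (U s) p))} = measure P {w \<in> space P. Q (Cinf (omega w p))}"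
    if "{w \<in> space P. Q (Cinf (omega w p))} \<in> sets P" for Q
  proof -
    have A: "{w \<in> space P. Q (Cinf (omega w p))} \<in> sets (CM Edges)" using that setsP by simp
    have "\<Phi> -` {w \<in> space P. Q (Cinf (omega w p))} \<inter> space M = {s \<in> space M. Q (Cinf (omega (U s) p))}"
    proof -
      have "Cinf (omega (\<Phi> s) p) = Cinf (omega (U s) p)" for s
        by (rule Cinf_agree) (simp add: \<Phi>_def)
      then show ?thesis using measurable_space[OF \<Phi>m] spaceP by auto
    qed
    then show ?thesis using measure_distr[OF \<Phi>m A] distr\<Phi> by simp
  qed
  define \<theta> where "\<theta> = measure P (B 0)"
  have th': "0 < \<theta>"
    using th transfer[of "\<lambda>C. 0 \<in> C"] Bsets[of 0] unfolding \<theta>_def B_def by simp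
  have pos: "0 < measure P (B 0 \<inter> L)"
  proof (rule ccontr)
    assume "\<not> ?thesis"
    then have z0: "measure P (B 0 \<inter> L) = 0" using measure_nonneg[of P "B 0 \<inter> L"] by linarith
    have aej: "AE w in P. w \<notin> B (smul j z) \<inter> L" for j
    proof (rule AE_I')
      show "B (smul j z) \<inter> L \<in> null_sets P"
        using mBL[of j] z0 Bsets Lsets by (intro null_setsI) (auto simp: Pp.emeasure_eq_measure)
    qed auto
    have "AE w in P. \<forall>j. w \<notin> B (smul j z) \<inter> L" unfolding AE_all_countable using aej by blast
    then have "AE w in P. w \<notin> L"
    proof (rule AE_mp)
      show "AE w in P. (\<forall>j. w \<notin> B (smul j z) \<inter> L) \<longrightarrow> w \<notin> L"
      proof (rule AE_I2, intro impI notI)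
        fix w assume w: "w \<in> space P" "\<forall>j. w \<notin> B (smul j z) \<inter> L" and wL: "w \<in> L"
        then have "infinite {k. smul k z \<in> Cinf (omega w p)}" unfolding L_def by simp
        then obtain k where "smul k z \<in> Cinf (omega w p)" using not_finite_existsD by blast
        with w wL show False unfolding B_def by auto
      qed
    qed
    then have "emeasure P L = 0"
      using AE_iff_measurable[OF Lsets, of "\<lambda>w. w \<notin> L"] L_def by auto
    then have L0: "measure P L = 0" by (simp add: Pp.emeasure_eq_measure)
    define C where "C m = {w \<in> space P. \<exists>n. smul (n + m) z \<in> Cinf (omega w p)}" for m
    have Csets: "C m \<in> sets P" for m
    proof -
      have "Measurable.pred (CM Edges) (\<lambda>w. \<exists>n. smul (n + m) z \<in> Cinf (omega w p))"
        by (intro pred_intros_countable pred_Cinf)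
      then show ?thesis unfolding C_def spaceP setsP Measurable.pred_def .
    qed
    have Cmono: "antimono_on UNIV C"
      unfolding decseq_def
    proof safe
      fix m n w assume "m \<le> n" "w \<in> C n"
      then obtain k where k: "w \<in> space P" "smul (k + n) z \<in> Cinf (omega w p)" unfolding C_def by auto
      have "k + n = (k + (n - m)) + m" using \<open>m \<le> n\<close> by simp
      then have "smul ((k + (n - m)) + m) z \<in> Cinf (omega w p)" using k(2) by simp
      then show "w \<in> C m" unfolding C_def using k(1) by blast
    qed
    have CL: "\<Inter> (range C) = L"
    proof -
      have "(\<forall>m. w \<in> C m) \<longleftrightarrow> w \<in> L" for w
        unfolding C_def L_def infinite_iff_shift by auto
      then show ?thesis by auto
    qed
    have "(\<lambda>m. measure P (C m)) \<longlonglongrightarrow> measure P (\<Inter> (range C))"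
      by (rule Pp.finite_Lim_measure_decseq) (use Csets Cmono in auto)
    then have lim: "(\<lambda>m. measure P (C m)) \<longlonglongrightarrow> measure P L" unfolding CL .
    have "\<theta> \<le> measure P (C m)" for m
    proof -
      have "B (smul m z) \<subseteq> C m" unfolding B_def C_def by (auto intro: exI[of _ 0])
      then have "measure P (B (smul m z)) \<le> measure P (C m)"
        by (rule Pp.finite_measure_mono) (rule Csets)
      then show ?thesis using mB[of m] unfolding \<theta>_def by simp
    qed
    then have "\<theta> \<le> measure P L" by (intro LIMSEQ_le_const[OF lim]) auto
    with L0 th' show False by simp
  qed
  have eq: "B 0 \<inter> L = {w \<in> space P. (\<lambda>C. 0 \<in> C \<and> infinite {k. smul k z \<in> C}) (Cinf (omega w p))}"
    unfolding B_def L_def by auto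
  have S: "{w \<in> space P. (\<lambda>C. 0 \<in> C \<and> infinite {k. smul k z \<in> C}) (Cinf (omega w p))} \<in> sets P"
    unfolding eq[symmetric] using Bsets[of 0] Lsets by blast
  have "measure M {s \<in> space M. (\<lambda>C. 0 \<in> C \<and> infinite {k. smul k z \<in> C}) (Cinf (omega (U s) p))}
      = measure P (B 0 \<inter> L)"
    unfolding eq by (rule transfer[OF S])
  then show ?thesis using pos by simp
qed



lemma eps_le:
  fixes X Y c :: real
  assumes "\<And>e. 0 < e \<Longrightarrow> X \<le> Y + e * c" "0 \<le> c"
  shows "X \<le> Y"
proof (rule ccontr)
  assume n: "\<not> X \<le> Y"
  define e where "e = (X - Y) / (c + 1)"
  have e: "0 < e" using n assms(2) by (simp add: e_def)
  have "X \<le> Y + e * c" using assms(1)[OF e] .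
  moreover have "e * c < X - Y"
  proof -
    have "(X - Y) * c < (X - Y) * (c + 1)" using n by simp
    then show ?thesis using assms(2) by (simp add: e_def field_simps)
  qed
  ultimately show False by linarith
qed

lemma AE_measure_zero:
  assumes "AE s in M. \<not> E s"
  shows "measure M {s \<in> space M. E s} = 0"
proof (cases "{s \<in> space M. E s} \<in> sets M")
  case True
  have "{x \<in> space M. \<not> \<not> E x} = {s \<in> space M. E s}" by simp
  from AE_iff_measurable[OF True this] assms have "emeasure M {s \<in> space M. E s} = 0" by simp
  then show ?thesis by (simp add: measure_def)
next
  case False
  then show ?thesis by (rule measure_notin_sets)
qed

lemma exists_good:
  assumes pos: "0 < measure M {s \<in> space M. E s}" and ae: "AE s in M. Q s"
  shows "\<exists>s\<in>space M. E s \<and> Q s"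
proof (rule ccontr)
  assume n: "\<not> ?thesis"
  have "AE s in M. Q s \<longrightarrow> \<not> E s" by (rule AE_I2) (use n in blast)
  then have "AE s in M. \<not> E s" using ae by (rule AE_mp[rotated])
  then have "measure M {s \<in> space M. E s} = 0" by (rule AE_measure_zero)
  with pos show False by simp
qed

lemma Cinf_has_nb:
  assumes "x \<in> Cinf w"
  shows "\<exists>y. adj w x y"
proof -
  have "infinite ({y. connected w x y} - {x})" using assms unfolding Cinf_def by simp
  then obtain y where y: "connected w x y" "y \<noteq> x" using infinite_imp_nonempty by blast
  from y(1) have "(adj w)\<^sup>*\<^sup>* x y" unfolding connected_def .
  then show ?thesis using y(2) by (cases rule: converse_rtranclpE) auto
qed

lemma theta_pos:
  fixes U :: "'a \<Rightarrow> 'd::finite edge \<Rightarrow> real"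
  assumes iid: "iid_uniform M U" and pq: "p_crit M U < q" "q \<le> p" "p \<le> 1"
  shows "0 < measure M {s \<in> space M. 0 \<in> Cinf (omega (U s) p)}"
proof -
  interpret prob_space M using iid by (simp add: iid_uniform_def)
  have ind: "indep_vars (\<lambda>_. borel) (\<lambda>e s. U s e) Edges" using iid by (simp add: iid_uniform_def)
  have rv: "random_variable borel (\<lambda>s. U s e)" if "e \<in> Edges" for e
    using ind that unfolding indep_vars_def2 by simp
  have marg: "distr M borel (\<lambda>s. U s e) = uniform_measure lborel {0<..<1}" if "e \<in> Edges" for e
    using iid that by (simp add: iid_uniform_def)
  define S where "S = {p \<in> {0..1}. measure M {s \<in> space M. 0 \<in> Cinf (omega (U s) p)} = 0}"
  have pc: "p_crit M U = Sup S" unfolding p_crit_def S_def ..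
  have le1: "AE s in M. U s e \<le> 1" if e: "e \<in> Edges" for e
  proof -
    have "AE x in uniform_measure lborel {0<..<1}. x \<le> (1::real)"
      by (rule AE_uniform_measureI) auto
    then have "AE x in distr M borel (\<lambda>s. U s e). x \<le> 1" unfolding marg[OF e] .
    then show ?thesis by (rule AE_distrD[OF rv[OF e]])
  qed
  have AEall: "AE s in M. \<forall>y::'d site. {0, y} \<in> Edges \<longrightarrow> U s {0, y} \<le> 1"
    unfolding AE_all_countable
  proof
    fix y :: "'d site"
    show "AE s in M. {0, y} \<in> Edges \<longrightarrow> U s {0, y} \<le> 1"
    proof (cases "{0, y} \<in> Edges")
      case True
      then show ?thesis using le1[OF True] by simp
    qed simp
  qed
  have "AE s in M. \<not> 0 \<in> Cinf (omega (U s) 0)"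
    using AEall
  proof (rule AE_mp)
    show "AE s in M. (\<forall>y. {0, y} \<in> Edges \<longrightarrow> U s {0, y} \<le> 1) \<longrightarrow> 0 \<notin> Cinf (omega (U s) 0)"
    proof (rule AE_I2, intro impI notI)
      fix s assume h: "\<forall>y. {0, y} \<in> Edges \<longrightarrow> U s {0, y} \<le> 1" and c: "0 \<in> Cinf (omega (U s) 0)"
      obtain y where "adj (omega (U s) 0) 0 y" using Cinf_has_nb[OF c] by blast
      then have "{0, y} \<in> Edges" "U s {0, y} > 1" unfolding adj_def omega_def by auto
      with h show False by force
    qed
  qed
  then have "measure M {s \<in> space M. 0 \<in> Cinf (omega (U s) 0)} = 0" by (rule AE_measure_zero)
  then have S0: "0 \<in> S" unfolding S_def by simp
  have bdd: "bdd_above S" unfolding S_def by (rule bdd_aboveI[of _ 1]) auto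
  have "0 \<le> p_crit M U" unfolding pc using cSup_upper[OF S0 bdd] .
  then have p01: "p \<in> {0..1}" using pq by auto
  have "measure M {s \<in> space M. 0 \<in> Cinf (omega (U s) p)} \<noteq> 0"
  proof
    assume "measure M {s \<in> space M. 0 \<in> Cinf (omega (U s) p)} = 0"
    then have "p \<in> S" using p01 unfolding S_def by simp
    then have "p \<le> p_crit M U" unfolding pc using cSup_upper[OF _ bdd] by blast
    with pq show False by linarith
  qed
  then show ?thesis using measure_nonneg[of M] by (simp add: order_less_le)
qed

lemma chem_cases:
  "chem w x y = \<infinity> \<or> (\<exists>d. chem w x y = ereal (real d) \<and> (adj w ^^ d) x y \<and> (\<forall>m<d. \<not> (adj w ^^ m) x y))"
proof (cases "\<exists>m. (adj w ^^ m) x y")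
  case True
  then obtain d where d: "(adj w ^^ d) x y" "\<forall>m<d. \<not> (adj w ^^ m) x y" by (rule reach_least)
  then show ?thesis using chem_eq[OF d] by blast
next
  case False
  then show ?thesis using chem_inf[of w x y] by blast
qed

lemma l1_smul: "l1 (smul k z) = int k * l1 z"
  unfolding l1_def smul_def by (simp add: abs_mult sum_distrib_left)

lemma l1_ge1: "z \<noteq> 0 \<Longrightarrow> 1 \<le> l1 (z :: 'd::finite site)"
proof -
  assume "z \<noteq> 0"
  then obtain i where i: "z $ i \<noteq> 0" by (auto simp: vec_eq_iff)
  have "\<bar>z $ i\<bar> \<le> l1 z" unfolding l1_def by (rule member_le_sum) auto
  with i show ?thesis by linarith
qed

lemma to_real_smul: "to_real (smul k z) = real k *\<^sub>R to_real z"
  by (simp add: to_real_def smul_def vec_eq_iff)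

lemma norm_hom: "is_norm f \<Longrightarrow> 0 \<le> c \<Longrightarrow> f (c *\<^sub>R x) = c * f x"
  unfolding is_norm_def by simp

lemma norm_zero: "is_norm f \<Longrightarrow> f 0 = 0"
  unfolding is_norm_def by simp

lemma to_real_zero: "to_real 0 = 0"
  by (simp add: to_real_def vec_eq_iff)

lemma core:
  fixes w :: "'d::finite env" and z :: "'d site" and \<alpha>1 \<alpha>2 :: "real^'d \<Rightarrow> real"
  assumes z: "z \<noteq> 0" and inf: "infinite {k. smul k z \<in> Cinf w}"
    and TC: "\<forall>\<epsilon>>0. \<exists>K. \<forall>k::nat. k \<ge> K \<longrightarrow> 0 < k \<longrightarrow> smul k z \<in> Cinf w \<longrightarrow>
               \<bar>chem w 0 (smul k z) / ereal (real k) - ereal m\<bar> \<le> ereal \<epsilon>"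
    and LY1: "\<forall>\<epsilon>>0. \<exists>R. \<forall>x \<in> Cinf w. real_of_int (l1 x) \<ge> R \<longrightarrow>
               \<bar>a_lam la w 0 x - ereal (\<alpha>1 (to_real x))\<bar> \<le> ereal (\<epsilon> * real_of_int (l1 x))"
    and LY2: "\<forall>\<epsilon>>0. \<exists>R. \<forall>x \<in> Cinf w. real_of_int (l1 x) \<ge> R \<longrightarrow>
               \<bar>a_lam lb w 0 x - ereal (\<alpha>2 (to_real x))\<bar> \<le> ereal (\<epsilon> * real_of_int (l1 x))"
    and n1: "is_norm \<alpha>1" and n2: "is_norm \<alpha>2" and la: "0 < la" and lb: "0 < lb" and e: "0 < \<epsilon>"
  shows "\<exists>c A1 A2. \<bar>c - m\<bar> \<le> \<epsilon> \<and> la * c \<le> A1 \<and> A1 \<le> (la + ln (2 * real CARD('d))) * c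
          \<and> lb * c \<le> A2 \<and> A2 \<le> (lb + ln (2 * real CARD('d))) * c
          \<and> \<bar>A1 - \<alpha>1 (to_real z)\<bar> \<le> \<epsilon> * real_of_int (l1 z)
          \<and> \<bar>A2 - \<alpha>2 (to_real z)\<bar> \<le> \<epsilon> * real_of_int (l1 z)
          \<and> (la \<le> lb \<longrightarrow> A2 / lb \<le> A1 / la)"
proof -
  define C where "C = ln (2 * real CARD('d))"
  obtain K where K: "\<forall>k::nat. k \<ge> K \<longrightarrow> 0 < k \<longrightarrow> smul k z \<in> Cinf w \<longrightarrow>
               \<bar>chem w 0 (smul k z) / ereal (real k) - ereal m\<bar> \<le> ereal \<epsilon>"
    using TC e by blast
  obtain R1 where R1: "\<forall>x \<in> Cinf w. real_of_int (l1 x) \<ge> R1 \<longrightarrow>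
               \<bar>a_lam la w 0 x - ereal (\<alpha>1 (to_real x))\<bar> \<le> ereal (\<epsilon> * real_of_int (l1 x))"
    using LY1 e by blast
  obtain R2 where R2: "\<forall>x \<in> Cinf w. real_of_int (l1 x) \<ge> R2 \<longrightarrow>
               \<bar>a_lam lb w 0 x - ereal (\<alpha>2 (to_real x))\<bar> \<le> ereal (\<epsilon> * real_of_int (l1 x))"
    using LY2 e by blast
  obtain k where k: "k \<ge> max K (max (nat \<lceil>R1\<rceil>) (max (nat \<lceil>R2\<rceil>) 1))" "smul k z \<in> Cinf w"
    using inf unfolding infinite_nat_iff_unbounded_le by blast
  define y where "y = smul k z"
  have kK: "k \<ge> K" and k1: "k \<ge> 1" using k(1) by auto
  have kpos: "0 < real k" using k1 by simp
  have kR: "R1 \<le> real k" "R2 \<le> real k" using k(1) by (auto simp: max_def split: if_splits; linarith)+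
  have lz: "1 \<le> real_of_int (l1 z)" using l1_ge1[OF z] by simp
  have ly: "real_of_int (l1 y) = real k * real_of_int (l1 z)" unfolding y_def l1_smul by simp
  have lyk: "real k \<le> real_of_int (l1 y)" unfolding ly using lz kpos by simp
  have yC: "y \<in> Cinf w" using k(2) y_def by simp
  have tc: "\<bar>chem w 0 y / ereal (real k) - ereal m\<bar> \<le> ereal \<epsilon>"
    using K kK k1 yC unfolding y_def by auto
  obtain d where d: "chem w 0 y = ereal (real d)" "(adj w ^^ d) 0 y" "\<forall>m<d. \<not> (adj w ^^ m) 0 y"
  proof -
    have "chem w 0 y \<noteq> \<infinity>"
    proof
      assume "chem w 0 y = \<infinity>"
      then have "chem w 0 y / ereal (real k) = \<infinity>" using kpos by simp
      then show False using tc by simp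
    qed
    then show ?thesis using chem_cases[of w 0 y] that by blast
  qed
  have cm: "\<bar>real d / real k - m\<bar> \<le> \<epsilon>" using tc d(1) kpos by simp
  note r1 = a_lam_reach[OF la d(2,3)] and r2 = a_lam_reach[OF lb d(2,3)]
  define AA1 where "AA1 = - ln (laplace la w 0 y)"
  define AA2 where "AA2 = - ln (laplace lb w 0 y)"
  have e1: "\<bar>AA1 - \<alpha>1 (to_real y)\<bar> \<le> \<epsilon> * real_of_int (l1 y)"
    using R1 yC kR(1) lyk r1(2) unfolding AA1_def by force
  have e2: "\<bar>AA2 - \<alpha>2 (to_real y)\<bar> \<le> \<epsilon> * real_of_int (l1 y)"
    using R2 yC kR(2) lyk r2(2) unfolding AA2_def by force
  have h1: "\<alpha>1 (to_real y) = real k * \<alpha>1 (to_real z)"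
    unfolding y_def to_real_smul using norm_hom[OF n1] by simp
  have h2: "\<alpha>2 (to_real y) = real k * \<alpha>2 (to_real z)"
    unfolding y_def to_real_smul using norm_hom[OF n2] by simp
  have mono: "la \<le> lb \<longrightarrow> AA2 / lb \<le> AA1 / la"
  proof
    assume "la \<le> lb"
    then have "a_lam lb w 0 y / ereal lb \<le> a_lam la w 0 y / ereal la" by (rule a_lam_mono[OF la])
    then show "AA2 / lb \<le> AA1 / la" using r1(2) r2(2) la lb unfolding AA1_def AA2_def by simp
  qed
  show ?thesis
  proof (intro exI conjI)
    show "\<bar>real d / real k - m\<bar> \<le> \<epsilon>" by (rule cm)
    show "la * (real d / real k) \<le> AA1 / real k"
    proof -
      have "la * real d \<le> AA1" using r1(3) unfolding AA1_def .
      then have "la * real d / real k \<le> AA1 / real k" using kpos by (intro divide_right_mono) auto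
      then show ?thesis by simp
    qed
    show "AA1 / real k \<le> (la + ln (2 * real CARD('d))) * (real d / real k)"
    proof -
      have "AA1 \<le> (la + ln (2 * real CARD('d))) * real d" using r1(4) unfolding AA1_def by (simp add: algebra_simps)
      then have "AA1 / real k \<le> (la + ln (2 * real CARD('d))) * real d / real k" using kpos by (intro divide_right_mono) auto
      then show ?thesis by simp
    qed
    show "lb * (real d / real k) \<le> AA2 / real k"
    proof -
      have "lb * real d \<le> AA2" using r2(3) unfolding AA2_def .
      then have "lb * real d / real k \<le> AA2 / real k" using kpos by (intro divide_right_mono) auto
      then show ?thesis by simp
    qed
    show "AA2 / real k \<le> (lb + ln (2 * real CARD('d))) * (real d / real k)"
    proof -
      have "AA2 \<le> (lb + ln (2 * real CARD('d))) * real d" using r2(4) unfolding AA2_def by (simp add: algebra_simps)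
      then have "AA2 / real k \<le> (lb + ln (2 * real CARD('d))) * real d / real k" using kpos by (intro divide_right_mono) auto
      then show ?thesis by simp
    qed
    have "AA1 / real k - \<alpha>1 (to_real z) = (AA1 - \<alpha>1 (to_real y)) / real k"
      using kpos h1 by (simp add: field_simps)
    then have "\<bar>AA1 / real k - \<alpha>1 (to_real z)\<bar> = \<bar>AA1 - \<alpha>1 (to_real y)\<bar> / real k"
      using kpos by (simp add: abs_divide)
    also have "\<dots> \<le> \<epsilon> * real_of_int (l1 z)"
      using e1 kpos unfolding ly by (simp add: field_simps)
    finally show "\<bar>AA1 / real k - \<alpha>1 (to_real z)\<bar> \<le> \<epsilon> * real_of_int (l1 z)" .
    have "AA2 / real k - \<alpha>2 (to_real z) = (AA2 - \<alpha>2 (to_real y)) / real k"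
      using kpos h2 by (simp add: field_simps)
    then have "\<bar>AA2 / real k - \<alpha>2 (to_real z)\<bar> = \<bar>AA2 - \<alpha>2 (to_real y)\<bar> / real k"
      using kpos by (simp add: abs_divide)
    also have "\<dots> \<le> \<epsilon> * real_of_int (l1 z)"
      using e2 kpos unfolding ly by (simp add: field_simps)
    finally show "\<bar>AA2 / real k - \<alpha>2 (to_real z)\<bar> \<le> \<epsilon> * real_of_int (l1 z)" .
    show "la \<le> lb \<longrightarrow> AA2 / real k / lb \<le> AA1 / real k / la"
    proof
      assume "la \<le> lb"
      then have "AA2 / lb / real k \<le> AA1 / la / real k"
        using mono kpos by (intro divide_right_mono) auto
      then show "AA2 / real k / lb \<le> AA1 / real k / la" by (simp add: divide_divide_eq_left mult.commute)
    qed
  qed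
qed



lemma lnC_nonneg: "0 \<le> ln (2 * real CARD('d::finite))"
proof -
  have "0 < CARD('d)" using card_gt_0_iff[of "UNIV::'d set"] by simp
  then have "1 \<le> 2 * real CARD('d)" by linarith
  then show ?thesis by simp
qed

lemma int_res:
  fixes w :: "'d::finite env" and z :: "'d site" and \<alpha>1 \<alpha>2 :: "real^'d \<Rightarrow> real"
  assumes z: "z \<noteq> 0" and inf: "infinite {k. smul k z \<in> Cinf w}"
    and TC: "\<forall>\<epsilon>>0. \<exists>K. \<forall>k::nat. k \<ge> K \<longrightarrow> 0 < k \<longrightarrow> smul k z \<in> Cinf w \<longrightarrow>
               \<bar>chem w 0 (smul k z) / ereal (real k) - ereal m\<bar> \<le> ereal \<epsilon>"
    and LY1: "\<forall>\<epsilon>>0. \<exists>R. \<forall>x \<in> Cinf w. real_of_int (l1 x) \<ge> R \<longrightarrow>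
               \<bar>a_lam la w 0 x - ereal (\<alpha>1 (to_real x))\<bar> \<le> ereal (\<epsilon> * real_of_int (l1 x))"
    and LY2: "\<forall>\<epsilon>>0. \<exists>R. \<forall>x \<in> Cinf w. real_of_int (l1 x) \<ge> R \<longrightarrow>
               \<bar>a_lam lb w 0 x - ereal (\<alpha>2 (to_real x))\<bar> \<le> ereal (\<epsilon> * real_of_int (l1 x))"
    and n1: "is_norm \<alpha>1" and n2: "is_norm \<alpha>2" and la: "0 < la" and lb: "0 < lb"
  shows "la * m \<le> \<alpha>1 (to_real z)"
    and "\<alpha>1 (to_real z) \<le> (la + ln (2 * real CARD('d))) * m"
    and "la \<le> lb \<Longrightarrow> \<alpha>2 (to_real z) / lb \<le> \<alpha>1 (to_real z) / la"
proof -
  define C where "C = ln (2 * real CARD('d))"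
  have C0: "0 \<le> C" unfolding C_def by (rule lnC_nonneg)
  define N where "N = real_of_int (l1 z)"
  have N0: "0 \<le> N" unfolding N_def using l1_ge1[OF z] by simp
  note cr = core[OF z inf TC LY1 LY2 n1 n2 la lb]
  show "la * m \<le> \<alpha>1 (to_real z)"
  proof (rule eps_le[where c = "N + la"])
    fix e :: real assume e: "0 < e"
    obtain c A1 A2 where h: "\<bar>c - m\<bar> \<le> e" "la * c \<le> A1" "\<bar>A1 - \<alpha>1 (to_real z)\<bar> \<le> e * N"
      using cr[OF e] unfolding N_def by blast
    have "la * m \<le> la * (c + e)" using h(1) la by (intro mult_left_mono) auto
    also have "\<dots> = la * c + e * la" by (simp add: algebra_simps)
    finally show "la * m \<le> \<alpha>1 (to_real z) + e * (N + la)" using h(2,3) by (simp add: algebra_simps)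
  qed (use N0 la in auto)
  show "\<alpha>1 (to_real z) \<le> (la + ln (2 * real CARD('d))) * m"
    unfolding C_def[symmetric]
  proof (rule eps_le[where c = "la + C + N"])
    fix e :: real assume e: "0 < e"
    obtain c A1 A2 where h: "\<bar>c - m\<bar> \<le> e" "A1 \<le> (la + C) * c" "\<bar>A1 - \<alpha>1 (to_real z)\<bar> \<le> e * N"
      using cr[OF e] unfolding N_def C_def by blast
    have "(la + C) * c \<le> (la + C) * (m + e)" using h(1) la C0 by (intro mult_left_mono) auto
    then show "\<alpha>1 (to_real z) \<le> (la + C) * m + e * (la + C + N)" using h(2,3) by (simp add: algebra_simps)
  qed (use N0 la C0 in auto)
  assume lab: "la \<le> lb"
  show "\<alpha>2 (to_real z) / lb \<le> \<alpha>1 (to_real z) / la"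
  proof (rule eps_le[where c = "N / la + N / lb"])
    fix e :: real assume e: "0 < e"
    obtain c A1 A2 where h: "\<bar>A1 - \<alpha>1 (to_real z)\<bar> \<le> e * N" "\<bar>A2 - \<alpha>2 (to_real z)\<bar> \<le> e * N"
        "A2 / lb \<le> A1 / la"
      using cr[OF e] lab unfolding N_def by blast
    have "\<alpha>2 (to_real z) / lb \<le> (A2 + e * N) / lb" using h(2) lb by (intro divide_right_mono) auto
    also have "\<dots> = A2 / lb + e * N / lb" by (simp add: add_divide_distrib)
    also have "\<dots> \<le> A1 / la + e * N / lb" using h(3) by simp
    also have "A1 / la \<le> (\<alpha>1 (to_real z) + e * N) / la" using h(1) la by (intro divide_right_mono) auto
    also have "(\<alpha>1 (to_real z) + e * N) / la = \<alpha>1 (to_real z) / la + e * N / la" by (simp add: add_divide_distrib)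
    finally show "\<alpha>2 (to_real z) / lb \<le> \<alpha>1 (to_real z) / la + e * (N / la + N / lb)"
      by (simp add: algebra_simps)
  qed (use N0 la lb in auto)
qed

lemma norm_cont: "is_norm f \<Longrightarrow> continuous_on UNIV f"
proof -
  assume n: "is_norm f"
  show ?thesis
  proof (rule convex_on_continuous)
    show "convex_on UNIV f"
      unfolding convex_on_def
    proof (intro conjI ballI allI impI)
      fix x y :: "real^'a" and u v :: real
      assume uv: "0 \<le> u" "0 \<le> v" "u + v = 1"
      have "f (u *\<^sub>R x + v *\<^sub>R y) \<le> f (u *\<^sub>R x) + f (v *\<^sub>R y)" using n unfolding is_norm_def by blast
      also have "\<dots> = u * f x + v * f y" using n uv unfolding is_norm_def by simp
      finally show "f (u *\<^sub>R x + v *\<^sub>R y) \<le> u * f x + v * f y" .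
    qed simp
  qed simp
qed

lemma extend:
  fixes F G :: "real^'d::finite \<Rightarrow> real"
  assumes cF: "continuous_on UNIV F" and cG: "continuous_on UNIV G"
    and hF: "\<And>c x. 0 < c \<Longrightarrow> F (c *\<^sub>R x) = c * F x"
    and hG: "\<And>c x. 0 < c \<Longrightarrow> G (c *\<^sub>R x) = c * G x"
    and int: "\<And>z. F (to_real z) \<le> G (to_real z)"
  shows "F x \<le> G x"
proof -
  define zs where "zs n = (\<chi> i. \<lfloor>real (Suc n) * x $ i\<rfloor>)" for n
  define xs where "xs n = (1 / real (Suc n)) *\<^sub>R to_real (zs n)" for n
  have conv: "xs \<longlonglongrightarrow> x"
  proof (rule vec_tendstoI)
    fix i
    have comp: "xs n $ i = real_of_int \<lfloor>real (Suc n) * x $ i\<rfloor> / real (Suc n)" for n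
      by (simp add: xs_def zs_def to_real_def)
    show "(\<lambda>n. xs n $ i) \<longlonglongrightarrow> x $ i"
    proof (rule tendsto_sandwich)
      show "\<forall>\<^sub>F n in sequentially. x $ i - inverse (real (Suc n)) \<le> xs n $ i"
      proof (rule always_eventually, rule allI)
        fix n
        have "real (Suc n) * x $ i - 1 \<le> real_of_int \<lfloor>real (Suc n) * x $ i\<rfloor>"
          using floor_correct[of "real (Suc n) * x $ i"] by linarith
        then have "(real (Suc n) * x $ i - 1) / real (Suc n) \<le> real_of_int \<lfloor>real (Suc n) * x $ i\<rfloor> / real (Suc n)"
          by (intro divide_right_mono) auto
        then show "x $ i - inverse (real (Suc n)) \<le> xs n $ i"
          unfolding comp by (simp add: field_simps)
      qed
      show "\<forall>\<^sub>F n in sequentially. xs n $ i \<le> x $ i"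
      proof (rule always_eventually, rule allI)
        fix n
        have "real_of_int \<lfloor>real (Suc n) * x $ i\<rfloor> \<le> real (Suc n) * x $ i"
          using floor_correct[of "real (Suc n) * x $ i"] by linarith
        then have "real_of_int \<lfloor>real (Suc n) * x $ i\<rfloor> / real (Suc n) \<le> real (Suc n) * x $ i / real (Suc n)"
          by (intro divide_right_mono) auto
        then show "xs n $ i \<le> x $ i" unfolding comp by simp
      qed
      show "(\<lambda>n. x $ i - inverse (real (Suc n))) \<longlonglongrightarrow> x $ i"
        using tendsto_diff[OF tendsto_const LIMSEQ_inverse_real_of_nat, of "x $ i"] by simp
    qed simp
  qed
  have le: "F (xs n) \<le> G (xs n)" for n
  proof -
    have p: "0 < 1 / real (Suc n)" by simp
    show ?thesis unfolding xs_def hF[OF p] hG[OF p] using int[of "zs n"] p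
      by (intro mult_left_mono) auto
  qed
  have lF: "(\<lambda>n. F (xs n)) \<longlonglongrightarrow> F x" by (rule continuous_on_tendsto_compose[OF cF conv]) auto
  have lG: "(\<lambda>n. G (xs n)) \<longlonglongrightarrow> G x" by (rule continuous_on_tendsto_compose[OF cG conv]) auto
  show ?thesis by (rule tendsto_le[OF trivial_limit_sequentially lG lF]) (simp add: le)
qed



theorem mainTheorem11:
  fixes M :: "'a measure"
    and U :: "'a \<Rightarrow> 'd::finite edge \<Rightarrow> real"
    and tb :: "'d site \<Rightarrow> 'd site set \<Rightarrow> 'd site"
    and p q :: real
    and \<alpha> :: "real \<Rightarrow> real ^ 'd \<Rightarrow> real"
    and \<mu> :: "real ^ 'd \<Rightarrow> real"
  assumes dim: "CARD('d) \<ge> 2"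
    and iid: "iid_uniform M U"
    and tiebreak: "\<forall>x S. finite S \<and> S \<noteq> {} \<longrightarrow> tb x S \<in> S"
    and pq: "p_crit M U < q" "q \<le> p" "p \<le> 1"
    and lyap: "\<forall>lam>0. is_lyapunov M U p lam (\<alpha> lam)"
    and tc: "is_time_constant M U p \<mu>"
  shows "(\<forall>x y :: 'd site. AE s in M.
            (\<forall>lam1 lam2. 0 < lam1 \<longrightarrow> lam1 \<le> lam2 \<longrightarrow>
               a_q tb (U s) q p lam2 x y / ereal lam2 \<le> a_q tb (U s) q p lam1 x y / ereal lam1)
          \<and> ((\<lambda>lam. a_q tb (U s) q p lam x y / ereal lam)
               \<longlongrightarrow> chem (omega (U s) p) (closest tb (omega (U s) q) x)
                                           (closest tb (omega (U s) q) y)) at_top)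
      \<and> (\<forall>x :: real ^ 'd.
            (\<forall>lam1 lam2. 0 < lam1 \<longrightarrow> lam1 \<le> lam2 \<longrightarrow> \<alpha> lam2 x / lam2 \<le> \<alpha> lam1 x / lam1)
          \<and> ((\<lambda>lam. \<alpha> lam x / lam) \<longlongrightarrow> \<mu> x) at_top)"
proof -
  define C where "C = ln (2 * real CARD('d))"
  have C0: "0 \<le> C" unfolding C_def by (rule lnC_nonneg)
  have part1: "\<forall>x y :: 'd site. AE s in M.
            (\<forall>lam1 lam2. 0 < lam1 \<longrightarrow> lam1 \<le> lam2 \<longrightarrow>
               a_q tb (U s) q p lam2 x y / ereal lam2 \<le> a_q tb (U s) q p lam1 x y / ereal lam1)
          \<and> ((\<lambda>lam. a_q tb (U s) q p lam x y / ereal lam)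
               \<longlongrightarrow> chem (omega (U s) p) (closest tb (omega (U s) q) x)
                                           (closest tb (omega (U s) q) y)) at_top"
  proof (intro allI, rule AE_I2, rule conjI)
    fix x y :: "'d site" and s
    show "\<forall>lam1 lam2. 0 < lam1 \<longrightarrow> lam1 \<le> lam2 \<longrightarrow>
               a_q tb (U s) q p lam2 x y / ereal lam2 \<le> a_q tb (U s) q p lam1 x y / ereal lam1"
      unfolding a_q_def using a_lam_mono by blast
    show "((\<lambda>lam. a_q tb (U s) q p lam x y / ereal lam)
               \<longlongrightarrow> chem (omega (U s) p) (closest tb (omega (U s) q) x)
                                           (closest tb (omega (U s) q) y)) at_top"
      unfolding a_q_def by (rule a_lam_lim)
  qed
  have th: "0 < measure M {s \<in> space M. 0 \<in> Cinf (omega (U s) p)}"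
    by (rule theta_pos[OF iid pq])
  have mun: "is_norm \<mu>" using tc unfolding is_time_constant_def by blast
  have an: "is_norm (\<alpha> lam)" if "0 < lam" for lam
    using lyap that unfolding is_lyapunov_def by blast
  have INT: "la * \<mu> (to_real z) \<le> \<alpha> la (to_real z) \<and> \<alpha> la (to_real z) \<le> (la + C) * \<mu> (to_real z)
       \<and> (la \<le> lb \<longrightarrow> \<alpha> lb (to_real z) / lb \<le> \<alpha> la (to_real z) / la)"
    if la: "0 < la" and lb: "0 < lb" for z :: "'d site" and la lb :: real
  proof (cases "z = 0")
    case True
    then show ?thesis
      using norm_zero[OF mun] norm_zero[OF an[OF la]] norm_zero[OF an[OF lb]] by (simp add: to_real_zero)
  next
    case False
    have E: "0 < measure M {s \<in> space M. 0 \<in> Cinf (omega (U s) p)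
                 \<and> infinite {k. smul k z \<in> Cinf (omega (U s) p)}}"
      by (rule key_prob[OF iid th])
    have ae1: "AE s in M. 0 \<in> Cinf (omega (U s) p) \<longrightarrow>
        (\<forall>\<epsilon>>0. \<exists>R. \<forall>x \<in> Cinf (omega (U s) p). real_of_int (l1 x) \<ge> R \<longrightarrow>
            \<bar>a_lam la (omega (U s) p) 0 x - ereal (\<alpha> la (to_real x))\<bar>
              \<le> ereal (\<epsilon> * real_of_int (l1 x)))"
      using lyap la unfolding is_lyapunov_def by blast
    have ae2: "AE s in M. 0 \<in> Cinf (omega (U s) p) \<longrightarrow>
        (\<forall>\<epsilon>>0. \<exists>R. \<forall>x \<in> Cinf (omega (U s) p). real_of_int (l1 x) \<ge> R \<longrightarrow>
            \<bar>a_lam lb (omega (U s) p) 0 x - ereal (\<alpha> lb (to_real x))\<bar>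
              \<le> ereal (\<epsilon> * real_of_int (l1 x)))"
      using lyap lb unfolding is_lyapunov_def by blast
    have ae3: "AE s in M. 0 \<in> Cinf (omega (U s) p) \<longrightarrow>
        (\<forall>\<epsilon>>0. \<exists>K. \<forall>k::nat. k \<ge> K \<longrightarrow> 0 < k \<longrightarrow>
            smul k z \<in> Cinf (omega (U s) p) \<longrightarrow>
            \<bar>chem (omega (U s) p) 0 (smul k z) / ereal (real k)
               - ereal (\<mu> (to_real z))\<bar> \<le> ereal \<epsilon>)"
      using tc unfolding is_time_constant_def smul_def by blast
    have "AE s in M. (0 \<in> Cinf (omega (U s) p) \<longrightarrow>
        (\<forall>\<epsilon>>0. \<exists>R. \<forall>x \<in> Cinf (omega (U s) p). real_of_int (l1 x) \<ge> R \<longrightarrow>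
            \<bar>a_lam la (omega (U s) p) 0 x - ereal (\<alpha> la (to_real x))\<bar>
              \<le> ereal (\<epsilon> * real_of_int (l1 x))))
      \<and> (0 \<in> Cinf (omega (U s) p) \<longrightarrow>
        (\<forall>\<epsilon>>0. \<exists>R. \<forall>x \<in> Cinf (omega (U s) p). real_of_int (l1 x) \<ge> R \<longrightarrow>
            \<bar>a_lam lb (omega (U s) p) 0 x - ereal (\<alpha> lb (to_real x))\<bar>
              \<le> ereal (\<epsilon> * real_of_int (l1 x))))
      \<and> (0 \<in> Cinf (omega (U s) p) \<longrightarrow>
        (\<forall>\<epsilon>>0. \<exists>K. \<forall>k::nat. k \<ge> K \<longrightarrow> 0 < k \<longrightarrow>
            smul k z \<in> Cinf (omega (U s) p) \<longrightarrow>
            \<bar>chem (omega (U s) p) 0 (smul k z) / ereal (real k)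
               - ereal (\<mu> (to_real z))\<bar> \<le> ereal \<epsilon>))"
      using ae1 ae2 ae3 by eventually_elim blast
    from exists_good[OF E this] obtain s where s: "0 \<in> Cinf (omega (U s) p)"
        "infinite {k. smul k z \<in> Cinf (omega (U s) p)}"
      and LY1: "\<forall>\<epsilon>>0. \<exists>R. \<forall>x \<in> Cinf (omega (U s) p). real_of_int (l1 x) \<ge> R \<longrightarrow>
            \<bar>a_lam la (omega (U s) p) 0 x - ereal (\<alpha> la (to_real x))\<bar>
              \<le> ereal (\<epsilon> * real_of_int (l1 x))"
      and LY2: "\<forall>\<epsilon>>0. \<exists>R. \<forall>x \<in> Cinf (omega (U s) p). real_of_int (l1 x) \<ge> R \<longrightarrow>
            \<bar>a_lam lb (omega (U s) p) 0 x - ereal (\<alpha> lb (to_real x))\<bar>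
              \<le> ereal (\<epsilon> * real_of_int (l1 x))"
      and TC: "\<forall>\<epsilon>>0. \<exists>K. \<forall>k::nat. k \<ge> K \<longrightarrow> 0 < k \<longrightarrow>
            smul k z \<in> Cinf (omega (U s) p) \<longrightarrow>
            \<bar>chem (omega (U s) p) 0 (smul k z) / ereal (real k)
               - ereal (\<mu> (to_real z))\<bar> \<le> ereal \<epsilon>"
      by blast
    note r = int_res[OF False s(2) TC LY1 LY2 an[OF la] an[OF lb] la lb]
    show ?thesis using r unfolding C_def by blast
  qed
  have cn: "continuous_on UNIV f" if "is_norm f" for f :: "real^'d \<Rightarrow> real"
    using norm_cont[OF that] .
  have hom: "f (c *\<^sub>R x) = c * f x" if "is_norm f" "0 < c" for f :: "real^'d \<Rightarrow> real" and c x
    using norm_hom[OF that(1)] that(2) by simp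
  have part2: "(\<forall>lam1 lam2. 0 < lam1 \<longrightarrow> lam1 \<le> lam2 \<longrightarrow> \<alpha> lam2 x / lam2 \<le> \<alpha> lam1 x / lam1)
          \<and> ((\<lambda>lam. \<alpha> lam x / lam) \<longlongrightarrow> \<mu> x) at_top" for x :: "real^'d"
  proof
    show "\<forall>lam1 lam2. 0 < lam1 \<longrightarrow> lam1 \<le> lam2 \<longrightarrow> \<alpha> lam2 x / lam2 \<le> \<alpha> lam1 x / lam1"
    proof (intro allI impI)
      fix la lb :: real assume la: "0 < la" and lab: "la \<le> lb"
      then have lb: "0 < lb" by linarith
      show "\<alpha> lb x / lb \<le> \<alpha> la x / la"
      proof (rule extend[where F = "\<lambda>x. \<alpha> lb x / lb" and G = "\<lambda>x. \<alpha> la x / la"])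
        show "continuous_on UNIV (\<lambda>x. \<alpha> lb x / lb)"
          using cn[OF an[OF lb]] lb by (intro continuous_intros) auto
        show "continuous_on UNIV (\<lambda>x. \<alpha> la x / la)"
          using cn[OF an[OF la]] la by (intro continuous_intros) auto
        show "\<alpha> lb (c *\<^sub>R y) / lb = c * (\<alpha> lb y / lb)" if "0 < c" for c y
          using hom[OF an[OF lb] that] by simp
        show "\<alpha> la (c *\<^sub>R y) / la = c * (\<alpha> la y / la)" if "0 < c" for c y
          using hom[OF an[OF la] that] by simp
        show "\<alpha> lb (to_real z) / lb \<le> \<alpha> la (to_real z) / la" for z
          using INT[OF la lb, of z] lab by blast
      qed
    qed
    have lo: "lam * \<mu> x \<le> \<alpha> lam x" if la: "0 < lam" for lam
    proof (rule extend[where F = "\<lambda>x. lam * \<mu> x" and G = "\<alpha> lam"])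
      show "continuous_on UNIV (\<lambda>x. lam * \<mu> x)"
        using cn[OF mun] by (intro continuous_intros) auto
      show "continuous_on UNIV (\<alpha> lam)" by (rule cn[OF an[OF la]])
      show "lam * \<mu> (c *\<^sub>R y) = c * (lam * \<mu> y)" if "0 < c" for c y
        using hom[OF mun that] by simp
      show "\<alpha> lam (c *\<^sub>R y) = c * \<alpha> lam y" if "0 < c" for c y
        using hom[OF an[OF la] that] by simp
      show "lam * \<mu> (to_real z) \<le> \<alpha> lam (to_real z)" for z
        using INT[OF la la, of z] by blast
    qed
    have up: "\<alpha> lam x \<le> (lam + C) * \<mu> x" if la: "0 < lam" for lam
    proof (rule extend[where F = "\<alpha> lam" and G = "\<lambda>x. (lam + C) * \<mu> x"])
      show "continuous_on UNIV (\<lambda>x. (lam + C) * \<mu> x)"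
        using cn[OF mun] by (intro continuous_intros) auto
      show "continuous_on UNIV (\<alpha> lam)" by (rule cn[OF an[OF la]])
      show "(lam + C) * \<mu> (c *\<^sub>R y) = c * ((lam + C) * \<mu> y)" if "0 < c" for c y
        using hom[OF mun that] by simp
      show "\<alpha> lam (c *\<^sub>R y) = c * \<alpha> lam y" if "0 < c" for c y
        using hom[OF an[OF la] that] by simp
      show "\<alpha> lam (to_real z) \<le> (lam + C) * \<mu> (to_real z)" for z
        using INT[OF la la, of z] by blast
    qed
    show "((\<lambda>lam. \<alpha> lam x / lam) \<longlongrightarrow> \<mu> x) at_top"
    proof (rule tendsto_sandwich)
      show "\<forall>\<^sub>F lam in at_top. \<mu> x \<le> \<alpha> lam x / lam"
        using eventually_gt_at_top[of "0::real"]
      proof eventually_elim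
        case (elim lam)
        then show ?case using lo[OF elim] by (simp add: field_simps)
      qed
      show "\<forall>\<^sub>F lam in at_top. \<alpha> lam x / lam \<le> \<mu> x + C * \<mu> x / lam"
        using eventually_gt_at_top[of "0::real"]
      proof eventually_elim
        case (elim lam)
        have "\<alpha> lam x / lam \<le> (lam + C) * \<mu> x / lam"
          using up[OF elim] elim by (intro divide_right_mono) auto
        also have "\<dots> = \<mu> x + C * \<mu> x / lam" using elim by (simp add: field_simps)
        finally show ?case .
      qed
      show "((\<lambda>lam. \<mu> x) \<longlongrightarrow> \<mu> x) at_top" by simp
      have "((\<lambda>lam::real. C * \<mu> x / lam) \<longlongrightarrow> 0) at_top"
        by (rule real_tendsto_divide_at_top[OF tendsto_const filterlim_ident])
      then show "((\<lambda>lam. \<mu> x + C * \<mu> x / lam) \<longlongrightarrow> \<mu> x) at_top"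
        using tendsto_add[OF tendsto_const, of _ 0 at_top "\<mu> x"] by simp
    qed
  qed
  show ?thesis using part1 part2 by blast
qed


end
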